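(* Let $k\ge 2$ and let $p,q$ be real polynomials with $\deg p=k$, $\deg q=k-1$, whose roots are real, simple and strictly interlacing; let $R=q/p$, viewed as a holomorphic map $\mathbb{C}P^1\to\mathbb{C}P^1$. For $\alpha\in\mathbb{R}$ let $p_1(\alpha)<\dots<p_k(\alpha)$ be the (real, simple) roots of $p+\alpha q$, and for $j=1,\dots,k-1$ let $D_j(\alpha)$ be the open disk having $[p_j(\alpha),p_{j+1}(\alpha)]$ as a diameter. Then for every $\alpha\in\mathbb{R}$ and every $j\in\{1,\dots,k-1\}$, $D_j(\alpha)$ is a maximal real univalent disk of $R$: $R$ is injective on $D_j(\alpha)$, and there is no real open disk in $\mathbb{C}P^1$ strictly containing $D_j(\alpha)$ on which $R$ is injective.
   Context: A disk in $\mathbb{C}P^1$ (an open disk, an open half-plane, or the complement of a closed disk together with $\infty$) is called real if it is invariant under complex conjugation. "Strictly interlacing" means $p_1<q_1<p_2<\dots<q_{k-1}<p_k$ for the roots $p_i$ of $p$ and $q_i$ of $q$. *)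

theory Defs
  imports "HOL-Analysis.Analysis" "HOL-Computational_Algebra.Polynomial"
begin

text \<open>CP^1 is modelled as complex option: Some z is the finite point z, None is infinity.\<close>

definition cpx :: "real poly \<Rightarrow> complex poly" where
  "cpx = map_poly complex_of_real"

text \<open>The rational map R = q/p on CP^1 (for coprime p, q).\<close>
definition ratmap :: "real poly \<Rightarrow> real poly \<Rightarrow> complex option \<Rightarrow> complex option" where
  "ratmap q p w = (case w of
      Some z \<Rightarrow> (if poly (cpx p) z = 0 then None else Some (poly (cpx q) z / poly (cpx p) z))
    | None \<Rightarrow> (if degree q < degree p then Some 0
              else if degree q = degree p then Some (complex_of_real (lead_coeff q / lead_coeff p))
              else None))"

definition disk_cp1 :: "complex option set \<Rightarrow> bool" where
  "disk_cp1 D \<longleftrightarrow>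
     (\<exists>c r. r > 0 \<and> D = Some ` ball c r) \<or>
     (\<exists>w a. w \<noteq> 0 \<and> D = Some ` {z. Re (z * cnj w) > a}) \<or>
     (\<exists>c r. r > 0 \<and> D = insert None (Some ` (- cball c r)))"

definition real_disk :: "complex option set \<Rightarrow> bool" where
  "real_disk D \<longleftrightarrow> disk_cp1 D \<and> map_option cnj ` D = D"

definition max_real_univalent :: "(complex option \<Rightarrow> complex option) \<Rightarrow> complex option set \<Rightarrow> bool" where
  "max_real_univalent f D \<longleftrightarrow> real_disk D \<and> inj_on f D \<and>
     \<not> (\<exists>D'. real_disk D' \<and> D \<subset> D' \<and> inj_on f D')"

end

theory Submission
  imports Defs
begin

lemma cpx_pCons: "cpx (pCons c P) = pCons (complex_of_real c) (cpx P)"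
  by (simp add: cpx_def map_poly_pCons)

lemma cpx_0 [simp]: "cpx 0 = 0" by (simp add: cpx_def)

lemma cpx_add: "cpx (P + Q) = cpx P + cpx Q"
  by (intro poly_eqI) (simp add: cpx_def coeff_map_poly)

lemma cpx_smult: "cpx (smult c P) = smult (complex_of_real c) (cpx P)"
  by (intro poly_eqI) (simp add: cpx_def coeff_map_poly)

lemma cpx_diff: "cpx (P - Q) = cpx P - cpx Q"
  by (intro poly_eqI) (simp add: cpx_def coeff_map_poly)

lemma cpx_mult: "cpx (P * Q) = cpx P * cpx Q"
  by (induction P) (simp_all add: cpx_pCons cpx_add cpx_smult)

lemma cpx_sum: "cpx (sum f A) = (\<Sum>x\<in>A. cpx (f x))"
  by (induction A rule: infinite_finite_induct) (simp_all add: cpx_add)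

lemma poly_cpx_of_real: "poly (cpx P) (complex_of_real x) = complex_of_real (poly P x)"
  by (induction P) (simp_all add: cpx_pCons)

lemma poly_cpx_lin: "poly (cpx [:-s, 1:]) z = z - complex_of_real s"
  by (simp add: cpx_pCons)


declare mult_pCons_left[simp del] mult_pCons_right[simp del]


lemma pderiv_at_root:
  fixes H :: "'a::idom poly"
  assumes "P = [:-a,1:] * H" shows "poly (pderiv P) a = poly H a"
proof -
  have "pderiv P = [:-a,1:] * pderiv H + H * pderiv [:-a,1:]" by (simp only: assms pderiv_mult)
  then show ?thesis by (simp add: pderiv_pCons)
qed

lemma simple_root_pderiv:
  fixes P :: "'a::idom poly"
  assumes "P \<noteq> 0" "order a P = 1" shows "poly (pderiv P) a \<noteq> 0"
proof
  assume h: "poly (pderiv P) a = 0"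
  have "poly P a = 0" using assms order_root by fastforce
  then obtain H where H: "P = [:-a,1:] * H" using poly_eq_0_iff_dvd by blast
  then have "poly H a = 0" using pderiv_at_root h by metis
  then obtain G where G: "H = [:-a,1:] * G" using poly_eq_0_iff_dvd by blast
  have "P = [:-a,1:]^2 * G" by (simp add: H G power2_eq_square mult.assoc)
  moreover have "Suc (order a P) = 2" using assms(2) by simp
  ultimately have "[:-a,1:] ^ Suc (order a P) dvd P" by (metis dvd_triv_left)
  then show False using order_2[OF assms(1)] by blast
qed

lemma noroot_same_sign:
  fixes G :: "real poly"
  assumes "x \<le> y" "\<And>t. x \<le> t \<Longrightarrow> t \<le> y \<Longrightarrow> poly G t \<noteq> 0"
  shows "poly G x * poly G y > 0"
proof -
  have nx: "poly G x \<noteq> 0" and ny: "poly G y \<noteq> 0" using assms by auto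
  show ?thesis
  proof (rule ccontr)
    assume "\<not> ?thesis"
    then have lt: "poly G x * poly G y < 0" using nx ny
      by (metis linorder_neqE_linordered_idom mult_eq_0_iff)
    then have "x < y" using assms(1) by (cases "x = y") (auto simp: mult_less_0_iff)
    from poly_IVT[OF this lt] obtain t where "t > x" "t < y" "poly G t = 0" by blast
    then show False using assms(2)[of t] by auto
  qed
qed

lemma consec_roots_pderiv:
  fixes P :: "real poly"
  assumes ab: "a < b" and ra: "poly P a = 0" and rb: "poly P b = 0"
    and nr: "\<And>x. a < x \<Longrightarrow> x < b \<Longrightarrow> poly P x \<noteq> 0"
    and da: "poly (pderiv P) a \<noteq> 0" and db: "poly (pderiv P) b \<noteq> 0"
  shows "poly (pderiv P) a * poly (pderiv P) b < 0"
proof -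
  obtain H where H: "P = [:-a,1:] * H" using ra poly_eq_0_iff_dvd by blast
  have "poly H b = 0" using rb ab H by simp
  then obtain G where G: "H = [:-b,1:] * G" using poly_eq_0_iff_dvd by blast
  have P1: "P = [:-a,1:] * ([:-b,1:] * G)" using H G by simp
  have P2: "P = [:-b,1:] * ([:-a,1:] * G)" using H G by (simp add: ac_simps)
  have e1: "poly (pderiv P) a = (a - b) * poly G a" using pderiv_at_root[OF P1] by simp
  have e2: "poly (pderiv P) b = (b - a) * poly G b" using pderiv_at_root[OF P2] by simp
  have "poly G a * poly G b > 0"
  proof (rule noroot_same_sign)
    fix t assume t: "a \<le> t" "t \<le> b"
    show "poly G t \<noteq> 0"
    proof (cases "t = a \<or> t = b")
      case True then show ?thesis using e1 e2 da db by auto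
    next
      case False
      then have "poly P t \<noteq> 0" using nr t by auto
      then show ?thesis using P1 by auto
    qed
  qed (use ab in auto)
  moreover have "(a - b) * (b - a) < 0" using ab by (simp add: mult_neg_pos)
  moreover have "poly (pderiv P) a * poly (pderiv P) b = ((a-b)*(b-a)) * (poly G a * poly G b)"
    by (simp add: e1 e2 algebra_simps)
  ultimately show ?thesis by (simp add: mult_neg_pos)
qed

lemma simple_root_sign_change:
  fixes Q :: "real poly"
  assumes xc: "x < c" and cy: "c < y" and rc: "poly Q c = 0" and dc: "poly (pderiv Q) c \<noteq> 0"
    and only: "\<And>t. x \<le> t \<Longrightarrow> t \<le> y \<Longrightarrow> poly Q t = 0 \<Longrightarrow> t = c"
  shows "poly Q x * poly Q y < 0"
proof -
  obtain G where G: "Q = [:-c,1:] * G" using rc poly_eq_0_iff_dvd by blast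
  have Gc: "poly G c \<noteq> 0" using pderiv_at_root[OF G] dc by simp
  have "poly G x * poly G y > 0"
  proof (rule noroot_same_sign)
    fix t assume t: "x \<le> t" "t \<le> y"
    show "poly G t \<noteq> 0"
    proof
      assume "poly G t = 0"
      then have "poly Q t = 0" using G by simp
      then have "t = c" using only t by auto
      then show False using Gc \<open>poly G t = 0\<close> by simp
    qed
  qed (use xc cy in auto)
  moreover have "(x - c) * (y - c) < 0" using xc cy by (simp add: mult_neg_pos)
  moreover have "poly Q x * poly Q y = ((x - c) * (y - c)) * (poly G x * poly G y)"
    using G by (simp add: algebra_simps)
  ultimately show ?thesis by (simp add: mult_neg_pos)
qed


lemma pderiv_sum': "pderiv (sum f A) = (\<Sum>x\<in>A. pderiv (f x))"
  by (induction A rule: infinite_finite_induct) (simp_all add: pderiv_add)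

lemma prod_lin_dvd:
  fixes P :: "real poly"
  assumes "finite S" "\<forall>s\<in>S. poly P s = 0"
  shows "(\<Prod>s\<in>S. [:-s,1:]) dvd P"
  using assms
proof (induction S arbitrary: P rule: finite_induct)
  case empty then show ?case by simp
next
  case (insert s S)
  then obtain P1 where P1: "P = (\<Prod>t\<in>S. [:-t,1:]) * P1" by (meson dvdE insert_iff)
  have "poly (\<Prod>t\<in>S. [:-t,1:]) s \<noteq> 0"
    using insert(1,2) by (auto simp: poly_prod)
  moreover have "poly P s = 0" using insert by auto
  ultimately have "poly P1 s = 0" using P1 by simp
  then obtain P2 where "P1 = [:-s,1:] * P2" using poly_eq_0_iff_dvd by blast
  then have "P = (\<Prod>t\<in>insert s S. [:-t,1:]) * P2"
    using P1 insert(1,2) by (simp add: ac_simps)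
  then show ?case by simp
qed

lemma card_roots_full:
  fixes P :: "real poly"
  assumes P0: "P \<noteq> 0" and n: "card {x. poly P x = 0} + 1 \<ge> degree P"
    and simple: "\<And>s. poly P s = 0 \<Longrightarrow> poly (pderiv P) s \<noteq> 0"
  shows "card {x. poly P x = 0} = degree P"
proof (rule ccontr)
  define S where "S = {x. poly P x = 0}"
  assume ne: "card {x. poly P x = 0} \<noteq> degree P"
  have fin: "finite S" unfolding S_def using poly_roots_finite[OF P0] .
  have "card S \<le> degree P" unfolding S_def using card_poly_roots_bound[OF P0] .
  with ne n have cS: "card S + 1 = degree P" unfolding S_def by linarith
  obtain g where g: "P = (\<Prod>s\<in>S. [:-s,1:]) * g"
    using prod_lin_dvd[OF fin] unfolding S_def by (auto elim: dvdE)
  have g0: "g \<noteq> 0" using g P0 by auto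
  have dprod: "degree (\<Prod>s\<in>S. [:-s,1:]) = card S"
    by (subst degree_prod_eq_sum_degree) auto
  have pr0: "(\<Prod>s\<in>S. [:-s,1:]) \<noteq> (0::real poly)" using fin by (simp add: prod_zero_iff)
  have "degree P = card S + degree g" using g g0 pr0 by (simp add: degree_mult_eq dprod)
  then have dg: "degree g = 1" using cS by simp
  define s0 where "s0 = - coeff g 0 / coeff g 1"
  have c1: "coeff g 1 \<noteq> 0" using dg g0 by (metis leading_coeff_0_iff)
  have "poly g s0 = coeff g 0 + coeff g 1 * s0"
    by (simp add: poly_altdef dg)
  then have gs0: "poly g s0 = 0" using c1 by (simp add: s0_def)
  have "poly P s0 = 0" by (subst g) (simp add: gs0)
  then have "s0 \<in> S" by (simp add: S_def)
  then have "(\<Prod>s\<in>S. [:-s,1:]) = [:-s0,1:] * (\<Prod>s\<in>S-{s0}. [:-s,1:])"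
    using fin by (simp add: prod.remove)
  then have "P = [:-s0,1:] * ((\<Prod>s\<in>S-{s0}. [:-s,1:]) * g)" using g by (simp add: ac_simps)
  from pderiv_at_root[OF this] have "poly (pderiv P) s0 = 0" using gs0 by simp
  moreover have "poly P s0 = 0" using \<open>s0 \<in> S\<close> by (simp add: S_def)
  ultimately show False using simple by blast
qed

lemma lagrange:
  fixes P Q :: "real poly"
  assumes fin: "finite S" and cS: "card S = degree P" and rS: "\<forall>s\<in>S. poly P s = 0"
    and dS: "\<forall>s\<in>S. poly (pderiv P) s \<noteq> 0" and dQ: "degree Q < degree P"
  shows "Q = (\<Sum>s\<in>S. smult (poly Q s / poly (pderiv P) s) (P div [:-s,1:]))"
proof -
  define g where "g s = P div [:-s,1:]" for s
  define c where "c s = poly Q s / poly (pderiv P) s" for s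
  have P0: "P \<noteq> 0" using dQ by auto
  have Pg: "P = [:-s,1:] * g s" if "s \<in> S" for s
    using rS that by (simp add: g_def poly_eq_0_iff_dvd)
  have gs: "poly (g s) s = poly (pderiv P) s" if "s \<in> S" for s
    using pderiv_at_root[OF Pg[OF that]] by simp
  have gt: "poly (g s) t = 0" if "s \<in> S" "t \<in> S" "t \<noteq> s" for s t
  proof -
    have "0 = poly P t" using rS that by simp
    also have "\<dots> = (t - s) * poly (g s) t" using Pg[OF that(1)] by simp
    finally show ?thesis using that by simp
  qed
  have dg: "degree (g s) < degree P" if "s \<in> S" for s
  proof -
    have "g s \<noteq> 0" using Pg[OF that] P0 by auto
    then have "degree P = 1 + degree (g s)" using Pg[OF that] by (simp add: degree_mult_eq)
    then show ?thesis by simp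
  qed
  define G where "G = Q - (\<Sum>s\<in>S. smult (c s) (g s))"
  have dG: "degree G < degree P"
    unfolding G_def
  proof (rule le_less_trans[OF degree_diff_le_max])
    have "degree (\<Sum>s\<in>S. smult (c s) (g s)) \<le> degree P - 1"
    proof (rule degree_sum_le[OF fin])
      fix s assume "s \<in> S"
      then show "degree (smult (c s) (g s)) \<le> degree P - 1"
        using dg[of s] degree_smult_le[of "c s" "g s"] by linarith
    qed
    then show "max (degree Q) (degree (\<Sum>s\<in>S. smult (c s) (g s))) < degree P"
      using dQ by auto
  qed
  have rG: "poly G t = 0" if "t \<in> S" for t
  proof -
    have "poly (\<Sum>s\<in>S. smult (c s) (g s)) t = (\<Sum>s\<in>S. c s * poly (g s) t)"
      by (simp add: poly_sum)
    also have "\<dots> = c t * poly (g t) t + (\<Sum>s\<in>S-{t}. c s * poly (g s) t)"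
      using fin that by (simp add: sum.remove)
    also have "(\<Sum>s\<in>S-{t}. c s * poly (g s) t) = 0"
      using gt that by (intro sum.neutral) auto
    also have "c t * poly (g t) t = poly Q t"
      using gs[OF that] dS that by (simp add: c_def)
    finally show ?thesis by (simp add: G_def)
  qed
  have "G = 0"
  proof (rule ccontr)
    assume "G \<noteq> 0"
    have "card S \<le> card {x. poly G x = 0}"
      using rG poly_roots_finite[OF \<open>G \<noteq> 0\<close>] by (intro card_mono) auto
    also have "\<dots> \<le> degree G" using card_poly_roots_bound[OF \<open>G \<noteq> 0\<close>] .
    finally show False using dG cS by simp
  qed
  then show ?thesis by (simp add: G_def c_def g_def)
qed

lemma wronskian_formula:
  fixes P Q :: "real poly"
  assumes fin: "finite S" and cS: "card S = degree P" and rS: "\<forall>s\<in>S. poly P s = 0"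
    and dS: "\<forall>s\<in>S. poly (pderiv P) s \<noteq> 0" and dQ: "degree Q < degree P"
  shows "Q * pderiv P - P * pderiv Q =
     (\<Sum>s\<in>S. smult (poly Q s / poly (pderiv P) s) ((P div [:-s,1:])^2))"
proof -
  define g where "g s = P div [:-s,1:]" for s
  define c where "c s = poly Q s / poly (pderiv P) s" for s
  have Pg: "P = [:-s,1:] * g s" if "s \<in> S" for s
    using rS that by (simp add: g_def poly_eq_0_iff_dvd)
  have Q: "Q = (\<Sum>s\<in>S. smult (c s) (g s))"
    using lagrange[OF assms] by (simp add: c_def g_def)
  have "Q * pderiv P - P * pderiv Q =
        (\<Sum>s\<in>S. smult (c s) (g s * pderiv P - P * pderiv (g s)))"
  proof -
    have 1: "Q * pderiv P = (\<Sum>s\<in>S. smult (c s) (g s * pderiv P))"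
      by (subst Q) (simp add: sum_distrib_right)
    have 2: "P * pderiv Q = (\<Sum>s\<in>S. smult (c s) (P * pderiv (g s)))"
      by (subst Q) (simp add: pderiv_sum' pderiv_smult sum_distrib_left)
    show ?thesis unfolding 1 2 by (simp add: sum_subtractf[symmetric] smult_diff_right)
  qed
  also have "\<dots> = (\<Sum>s\<in>S. smult (c s) ((g s)^2))"
  proof (rule sum.cong[OF refl])
    fix s assume s: "s \<in> S"
    have "pderiv P = [:-s,1:] * pderiv (g s) + g s"
      by (subst Pg[OF s]) (simp add: pderiv_mult pderiv_pCons)
    then have "g s * pderiv P - P * pderiv (g s) = (g s)^2"
      by (subst (2) Pg[OF s]) (simp add: algebra_simps power2_eq_square)
    then show "smult (c s) (g s * pderiv P - P * pderiv (g s)) = smult (c s) ((g s)^2)" by simp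
  qed
  finally show ?thesis by (simp add: c_def g_def)
qed


definition Kc :: "complex \<Rightarrow> bool" where "Kc x \<longleftrightarrow> \<bar>Im x\<bar> < Re x"

lemma Kc_nz: "Kc x \<Longrightarrow> x \<noteq> 0" by (auto simp: Kc_def)

lemma Kc_inverse: "Kc x \<Longrightarrow> Kc (inverse x)"
proof -
  assume k: "Kc x"
  have "Re x > 0" using k unfolding Kc_def by (meson abs_ge_zero le_less_trans)
  then have pos: "(Re x)\<^sup>2 + (Im x)\<^sup>2 > 0" by (simp add: add_pos_nonneg)
  show ?thesis using k pos by (auto simp: Kc_def abs_div divide_strict_right_mono)
qed

lemma Kc_mult_re: "Kc x \<Longrightarrow> Kc y \<Longrightarrow> Re (x * y) > 0"
proof -
  assume "Kc x" "Kc y"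
  then have "\<bar>Im x\<bar> * \<bar>Im y\<bar> < Re x * Re y"
    by (auto simp: Kc_def intro: mult_strict_mono' abs_ge_zero le_less_trans)
  moreover have "Im x * Im y \<le> \<bar>Im x\<bar> * \<bar>Im y\<bar>" by (metis abs_ge_self abs_mult)
  ultimately show ?thesis by simp
qed

lemma Re_inverse_pos: "Re x > 0 \<Longrightarrow> Re (inverse x) > 0"
proof -
  assume h: "Re x > 0"
  then have "(Re x)\<^sup>2 + (Im x)\<^sup>2 > 0" by (simp add: add_pos_nonneg)
  then show ?thesis using h by simp
qed

lemma Kc_add_scale:
  assumes "Kc u" "Kc v" "t \<ge> 0" shows "Kc (u + complex_of_real t * (u + v))"
proof -
  have i: "Im (u + complex_of_real t * (u + v)) = (1+t)*Im u + t*Im v" by (simp add: algebra_simps)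
  have r: "Re (u + complex_of_real t * (u + v)) = (1+t)*Re u + t*Re v" by (simp add: algebra_simps)
  have "\<bar>(1+t)*Im u + t*Im v\<bar> \<le> \<bar>(1+t)*Im u\<bar> + \<bar>t*Im v\<bar>" by (rule abs_triangle_ineq)
  also have "\<dots> = (1+t)*\<bar>Im u\<bar> + t*\<bar>Im v\<bar>" using assms(3) by (simp add: abs_mult)
  finally have h0: "\<bar>(1+t)*Im u + t*Im v\<bar> \<le> (1+t)*\<bar>Im u\<bar> + t*\<bar>Im v\<bar>" .
  have h1: "(1+t)*\<bar>Im u\<bar> < (1+t)*Re u" using assms(1,3) unfolding Kc_def by simp
  have h2: "t*\<bar>Im v\<bar> \<le> t*Re v" using assms(2,3) unfolding Kc_def by (simp add: mult_left_mono)
  have "\<bar>(1+t)*Im u + t*Im v\<bar> < (1+t)*Re u + t*Re v" using h0 h1 h2 by linarith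
  then show ?thesis unfolding Kc_def i r .
qed

lemma half_dir:
  assumes A0: "A \<noteq> 0" and pos: "Re (B * cnj A) > 0"
  shows "Kc (complex_of_real (cmod B) + B * complex_of_real (cmod A) / A)"
proof -
  define \<omega> where "\<omega> = B * complex_of_real (cmod A) / A"
  have nA: "cmod A > 0" using A0 by simp
  have w: "\<omega> = B * cnj A / complex_of_real (cmod A)"
  proof -
    have "A * cnj A = complex_of_real (cmod A) * complex_of_real (cmod A)"
      using complex_norm_square[of A] by (metis of_real_mult power2_eq_square)
    then show ?thesis using A0 unfolding \<omega>_def by (simp add: field_simps)
  qed
  have reo: "Re \<omega> > 0" using pos nA by (simp add: w Re_divide_of_real)
  have co: "cmod \<omega> = cmod B" using nA by (simp add: w norm_mult norm_divide)
  have "\<bar>Im \<omega>\<bar> \<le> cmod \<omega>" by (rule abs_Im_le_cmod)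
  then show ?thesis unfolding \<omega>_def[symmetric] Kc_def using reo co by simp
qed

lemma ball_Re:
  assumes "z \<in> ball (complex_of_real ((a+b)/2)) ((b-a)/2)"
  shows "Re ((z - complex_of_real a) * cnj (complex_of_real b - z)) > 0"
proof -
  have "cmod (z - complex_of_real ((a+b)/2)) < (b-a)/2" using assms by (simp add: dist_norm norm_minus_commute)
  then have "(cmod (z - complex_of_real ((a+b)/2)))^2 < ((b-a)/2)^2"
    by (meson norm_ge_zero power_strict_mono zero_less_numeral)
  then have "(Re z - (a+b)/2)^2 + (Im z)^2 < ((b-a)/2)^2"
    by (simp add: cmod_power2)
  moreover have "Re ((z - complex_of_real a) * cnj (complex_of_real b - z)) =
     ((b-a)/2)^2 - ((Re z - (a+b)/2)^2 + (Im z)^2)"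
    by (simp add: power2_eq_square algebra_simps divide_simps)
  ultimately show ?thesis by linarith
qed

lemma cone_dir:
  assumes "z \<in> ball (complex_of_real ((a+b)/2)) ((b-a)/2)"
  shows "\<exists>l. l \<noteq> 0 \<and> Kc ((z - complex_of_real a) / l) \<and> Kc ((complex_of_real b - z) / l)"
proof -
  define A where "A = z - complex_of_real a"
  define B where "B = complex_of_real b - z"
  have p1: "Re (A * cnj B) > 0" using ball_Re[OF assms] by (simp add: A_def B_def)
  have A0: "A \<noteq> 0" using p1 by auto
  have B0: "B \<noteq> 0" using p1 by auto
  have p2: "Re (B * cnj A) > 0" using p1 by (simp add: mult.commute)
  define l where "l = A * complex_of_real (cmod B) + B * complex_of_real (cmod A)"
  have e1: "l / A = complex_of_real (cmod B) + B * complex_of_real (cmod A) / A"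
    using A0 by (simp add: l_def field_simps)
  have e2: "l / B = complex_of_real (cmod A) + A * complex_of_real (cmod B) / B"
    using B0 by (simp add: l_def field_simps)
  have k1: "Kc (l / A)" using half_dir[OF A0 p2] e1 by simp
  have k2: "Kc (l / B)" using half_dir[OF B0 p1] e2 by simp
  have l0: "l \<noteq> 0" using Kc_nz[OF k1] by auto
  have "Kc (A / l)" using Kc_inverse[OF k1] by (simp add: inverse_eq_divide)
  moreover have "Kc (B / l)" using Kc_inverse[OF k2] by (simp add: inverse_eq_divide)
  ultimately show ?thesis using l0 by (auto simp: A_def B_def)
qed

lemma cone_point:
  assumes ab: "a < b" and z: "z \<in> ball (complex_of_real ((a+b)/2)) ((b-a)/2)"
  shows "\<exists>l. l \<noteq> 0 \<and> (\<forall>s. s \<le> a \<longrightarrow> Kc ((z - complex_of_real s) / l))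
                     \<and> (\<forall>s. b \<le> s \<longrightarrow> Kc ((complex_of_real s - z) / l))"
proof -
  obtain l where l: "l \<noteq> 0" and kA: "Kc ((z - complex_of_real a) / l)"
    and kB: "Kc ((complex_of_real b - z) / l)" using cone_dir[OF z] by blast
  define U where "U = (z - complex_of_real a) / l"
  define V where "V = (complex_of_real b - z) / l"
  have UV: "U + V = complex_of_real (b - a) / l" by (simp add: U_def V_def add_divide_distrib[symmetric])
  have "Kc ((z - complex_of_real s) / l)" if "s \<le> a" for s
  proof -
    have "(z - complex_of_real s) / l = U + complex_of_real ((a - s)/(b - a)) * (U + V)"
      using ab l by (simp add: U_def V_def field_simps)
    then show ?thesis using Kc_add_scale[of U V "(a-s)/(b-a)"] kA kB ab that
      by (simp add: U_def V_def)
  qed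
  moreover have "Kc ((complex_of_real s - z) / l)" if "b \<le> s" for s
  proof -
    have "(complex_of_real s - z) / l = V + complex_of_real ((s - b)/(b - a)) * (V + U)"
      using ab l by (simp add: U_def V_def field_simps)
    then show ?thesis using Kc_add_scale[of V U "(s-b)/(b-a)"] kA kB ab that
      by (simp add: U_def V_def)
  qed
  ultimately show ?thesis using l by blast
qed


lemma partial_inj:
  fixes S :: "real set" and d :: "real \<Rightarrow> real" and \<sigma> :: real
  assumes ab: "a < b" and fin: "finite S" and ne: "S \<noteq> {}"
    and out: "\<forall>s\<in>S. s \<le> a \<or> b \<le> s" and sg: "\<forall>s\<in>S. \<sigma> * d s > 0"
    and z: "z \<in> ball (complex_of_real ((a+b)/2)) ((b-a)/2)"
    and w: "w \<in> ball (complex_of_real ((a+b)/2)) ((b-a)/2)"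
    and eq: "(\<Sum>s\<in>S. complex_of_real (d s) / (z - complex_of_real s)) =
             (\<Sum>s\<in>S. complex_of_real (d s) / (w - complex_of_real s))"
  shows "z = w"
proof -
  obtain l1 where l1: "l1 \<noteq> 0" "\<forall>s. s \<le> a \<longrightarrow> Kc ((z - complex_of_real s) / l1)"
      "\<forall>s. b \<le> s \<longrightarrow> Kc ((complex_of_real s - z) / l1)" using cone_point[OF ab z] by blast
  obtain l2 where l2: "l2 \<noteq> 0" "\<forall>s. s \<le> a \<longrightarrow> Kc ((w - complex_of_real s) / l2)"
      "\<forall>s. b \<le> s \<longrightarrow> Kc ((complex_of_real s - w) / l2)" using cone_point[OF ab w] by blast
  define X where "X s = (if s \<le> a then (z - complex_of_real s) / l1 else (complex_of_real s - z) / l1)" for s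
  define Y where "Y s = (if s \<le> a then (w - complex_of_real s) / l2 else (complex_of_real s - w) / l2)" for s
  have KX: "Kc (X s)" and KY: "Kc (Y s)" if "s \<in> S" for s
    using out that l1 l2 by (auto simp: X_def Y_def)
  have prod: "(z - complex_of_real s) * (w - complex_of_real s) = l1 * l2 * (X s * Y s)" for s
    using l1(1) l2(1) by (simp add: X_def Y_def field_simps)
  have nz: "z - complex_of_real s \<noteq> 0" "w - complex_of_real s \<noteq> 0" if "s \<in> S" for s
    using Kc_nz[OF KX[OF that]] Kc_nz[OF KY[OF that]] by (auto simp: X_def Y_def split: if_splits)
  define G where "G = (\<Sum>s\<in>S. complex_of_real (d s) * inverse (X s * Y s))"
  have "Re (complex_of_real \<sigma> * G) = (\<Sum>s\<in>S. (\<sigma> * d s) * Re (inverse (X s * Y s)))"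
    by (simp add: G_def sum_distrib_left Re_sum mult.assoc)
  also have "\<dots> > 0"
  proof (rule sum_pos[OF fin ne])
    fix s assume s: "s \<in> S"
    have "Re (inverse (X s * Y s)) > 0"
      using Re_inverse_pos Kc_mult_re KX[OF s] KY[OF s] by blast
    then show "0 < \<sigma> * d s * Re (inverse (X s * Y s))" using sg s by simp
  qed
  finally have G0: "G \<noteq> 0" by auto
  have "0 = (\<Sum>s\<in>S. complex_of_real (d s) / (z - complex_of_real s)) -
            (\<Sum>s\<in>S. complex_of_real (d s) / (w - complex_of_real s))" using eq by simp
  also have "\<dots> = (\<Sum>s\<in>S. (w - z) * inverse (l1 * l2) * (complex_of_real (d s) * inverse (X s * Y s)))"
    unfolding sum_subtractf[symmetric]
  proof (rule sum.cong[OF refl])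
    fix s assume s: "s \<in> S"
    have "complex_of_real (d s) / (z - complex_of_real s) - complex_of_real (d s) / (w - complex_of_real s)
        = (w - z) * complex_of_real (d s) / ((z - complex_of_real s) * (w - complex_of_real s))"
      using nz[OF s] by (simp add: field_simps)
    also have "\<dots> = (w - z) * inverse (l1 * l2) * (complex_of_real (d s) * inverse (X s * Y s))"
      unfolding prod by (simp add: field_simps)
    finally show "complex_of_real (d s) / (z - complex_of_real s) - complex_of_real (d s) / (w - complex_of_real s)
        = (w - z) * inverse (l1 * l2) * (complex_of_real (d s) * inverse (X s * Y s))" .
  qed
  also have "\<dots> = (w - z) * inverse (l1 * l2) * G" by (simp add: G_def sum_distrib_left)
  finally show ?thesis using G0 l1(1) l2(1) by simp
qed


declare mult_pCons_left[simp del] mult_pCons_right[simp del]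

lemma mono_from_succ:
  fixes f :: "nat \<Rightarrow> real"
  assumes "\<forall>i\<in>{1..k-1}. f i < f (Suc i)" "1 \<le> i" "i < l" "l \<le> k"
  shows "f i < f l"
  using assms(3,4)
proof (induction l)
  case 0 then show ?case by simp
next
  case (Suc l)
  show ?case
  proof (cases "i = l")
    case True then show ?thesis using assms(1,2) Suc.prems by auto
  next
    case False
    then have "f i < f l" using Suc by auto
    also have "f l < f (Suc l)" using assms(1,2) Suc.prems False by auto
    finally show ?thesis .
  qed
qed

locale setting =
  fixes p q :: "real poly" and k :: nat and ps qs :: "nat \<Rightarrow> real"
  assumes k2: "k \<ge> 2" and dp: "degree p = k" and dq: "degree q = k - 1"
    and rp: "{z. poly (cpx p) z = 0} = complex_of_real ` ps ` {1..k}"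
    and rq: "{z. poly (cpx q) z = 0} = complex_of_real ` qs ` {1..k-1}"
    and op: "\<forall>i\<in>{1..k}. order (ps i) p = 1"
    and oq: "\<forall>i\<in>{1..k-1}. order (qs i) q = 1"
    and il: "\<forall>i\<in>{1..k-1}. ps i < qs i \<and> qs i < ps (Suc i)"
begin

lemma p0: "p \<noteq> 0" using dp k2 by auto
lemma q0: "q \<noteq> 0" using dq k2 by auto

lemma ps_less: "1 \<le> i \<Longrightarrow> i < l \<Longrightarrow> l \<le> k \<Longrightarrow> ps i < ps l"
  using mono_from_succ[of k ps i l] il by fastforce

lemma ps_le: "1 \<le> i \<Longrightarrow> i \<le> l \<Longrightarrow> l \<le> k \<Longrightarrow> ps i \<le> ps l"
  using ps_less by (cases "i = l") (auto simp: less_imp_le)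

lemma ps_inj: "inj_on ps {1..k}"
proof (rule inj_onI)
  fix i l assume "i \<in> {1..k}" "l \<in> {1..k}" "ps i = ps l"
  then show "i = l" using ps_less[of i l] ps_less[of l i] by (cases i l rule: linorder_cases) auto
qed

lemma roots_p: "poly p x = 0 \<longleftrightarrow> x \<in> ps ` {1..k}"
proof -
  have "poly p x = 0 \<longleftrightarrow> complex_of_real x \<in> {z. poly (cpx p) z = 0}"
    by (simp add: poly_cpx_of_real)
  also have "\<dots> \<longleftrightarrow> x \<in> ps ` {1..k}" unfolding rp by (auto simp: image_iff)
  finally show ?thesis .
qed

lemma roots_q: "poly q x = 0 \<longleftrightarrow> x \<in> qs ` {1..k-1}"
proof -
  have "poly q x = 0 \<longleftrightarrow> complex_of_real x \<in> {z. poly (cpx q) z = 0}"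
    by (simp add: poly_cpx_of_real)
  also have "\<dots> \<longleftrightarrow> x \<in> qs ` {1..k-1}" unfolding rq by (auto simp: image_iff)
  finally show ?thesis .
qed

lemma ps_ne_qs: "i \<in> {1..k} \<Longrightarrow> l \<in> {1..k-1} \<Longrightarrow> ps i \<noteq> qs l"
proof -
  assume i: "i \<in> {1..k}" and l: "l \<in> {1..k-1}"
  show ?thesis
  proof (cases "l < i")
    case True
    then have "qs l < ps (Suc l)" using il l by auto
    also have "ps (Suc l) \<le> ps i" using ps_le[of "Suc l" i] True i l by auto
    finally show ?thesis by simp
  next
    case False
    then have "ps i \<le> ps l" using ps_le[of i l] i l by auto
    also have "ps l < qs l" using il l by auto
    finally show ?thesis by simp
  qed
qed

lemma no_common_root: "poly (cpx p) z = 0 \<Longrightarrow> poly (cpx q) z = 0 \<Longrightarrow> False"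
proof -
  assume "poly (cpx p) z = 0" "poly (cpx q) z = 0"
  then have "z \<in> complex_of_real ` ps ` {1..k}" "z \<in> complex_of_real ` qs ` {1..k-1}"
    using rp rq by blast+
  then obtain i l where "i \<in> {1..k}" "l \<in> {1..k-1}" "ps i = qs l" by auto
  then show False using ps_ne_qs by blast
qed

lemma q_at_ps: "i \<in> {1..k} \<Longrightarrow> poly q (ps i) \<noteq> 0"
  using roots_q ps_ne_qs by (metis imageE)

lemma dp_at_ps: "i \<in> {1..k} \<Longrightarrow> poly (pderiv p) (ps i) \<noteq> 0"
  using simple_root_pderiv[OF p0] op by blast

lemma dq_at_qs: "l \<in> {1..k-1} \<Longrightarrow> poly (pderiv q) (qs l) \<noteq> 0"
  using simple_root_pderiv[OF q0] oq by blast

definition c :: "real \<Rightarrow> real" where "c s = poly q s / poly (pderiv p) s"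

lemma alt_lemmas: assumes i: "i \<in> {1..k-1}"
  shows "poly (pderiv p) (ps i) * poly (pderiv p) (ps (Suc i)) < 0 \<and> poly q (ps i) * poly q (ps (Suc i)) < 0"
proof -
  have i1: "i \<in> {1..k}" "Suc i \<in> {1..k}" using i by auto
  have lt: "ps i < ps (Suc i)" using ps_less[of i "Suc i"] i by auto
  have dd: "poly (pderiv p) (ps i) * poly (pderiv p) (ps (Suc i)) < 0"
  proof (rule consec_roots_pderiv[OF lt])
    show "poly p (ps i) = 0" "poly p (ps (Suc i)) = 0" using roots_p i1 by auto
    show "poly (pderiv p) (ps i) \<noteq> 0" "poly (pderiv p) (ps (Suc i)) \<noteq> 0" using dp_at_ps i1 by auto
    fix x assume x: "ps i < x" "x < ps (Suc i)"
    show "poly p x \<noteq> 0"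
    proof
      assume "poly p x = 0"
      then obtain l where l: "l \<in> {1..k}" "x = ps l" using roots_p by auto
      show False
      proof (cases "l \<le> i")
        case True
        have "ps l \<le> ps i" using ps_le[of l i] l i1 True by auto
        then show False using l x by auto
      next
        case False
        have "ps (Suc i) \<le> ps l" using ps_le[of "Suc i" l] l i1 False by auto
        then show False using l x by auto
      qed
    qed
  qed
  have qq: "poly q (ps i) * poly q (ps (Suc i)) < 0"
  proof (rule simple_root_sign_change)
    show "ps i < qs i" "qs i < ps (Suc i)" using il i by auto
    show "poly q (qs i) = 0" using roots_q i by auto
    show "poly (pderiv q) (qs i) \<noteq> 0" using dq_at_qs i by auto
    fix t assume t: "ps i \<le> t" "t \<le> ps (Suc i)" "poly q t = 0"
    then obtain l where l: "l \<in> {1..k-1}" "t = qs l" using roots_q by auto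
    show "t = qs i"
    proof (cases l i rule: linorder_cases)
      case less
      then have "qs l < ps (Suc l)" using il l by auto
      moreover have "ps (Suc l) \<le> ps i" using ps_le[of "Suc l" i] less i l by auto
      ultimately show ?thesis using t l by auto
    next
      case greater
      then have "ps l < qs l" using il l by auto
      moreover have "ps (Suc i) \<le> ps l" using ps_le[of "Suc i" l] greater i l by auto
      ultimately show ?thesis using t l by auto
    qed (use l in auto)
  qed
  show ?thesis using dd qq by simp
qed

lemma q_alt: "i \<in> {1..k-1} \<Longrightarrow> poly q (ps i) * poly q (ps (Suc i)) < 0"
  using alt_lemmas by blast

lemma c_consec: assumes i: "i \<in> {1..k-1}" shows "c (ps i) * c (ps (Suc i)) > 0"
proof -
  have dd: "poly (pderiv p) (ps i) * poly (pderiv p) (ps (Suc i)) < 0" using alt_lemmas[OF i] by blast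
  have qq: "poly q (ps i) * poly q (ps (Suc i)) < 0" using alt_lemmas[OF i] by blast
  have "c (ps i) * c (ps (Suc i)) = (poly q (ps i) * poly q (ps (Suc i))) /
          (poly (pderiv p) (ps i) * poly (pderiv p) (ps (Suc i)))"
    by (simp add: c_def)
  also have "\<dots> > 0" using dd qq by (simp add: divide_neg_neg)
  finally show ?thesis .
qed

definition \<sigma> :: real where "\<sigma> = c (ps 1)"

lemma sigma_c: "i \<in> {1..k} \<Longrightarrow> \<sigma> * c (ps i) > 0"
proof (induction i)
  case 0 then show ?case by simp
next
  case (Suc i)
  show ?case
  proof (cases "i = 0")
    case True
    have "c (ps 1) \<noteq> 0" using q_at_ps[of 1] dp_at_ps[of 1] k2 by (simp add: c_def)
    then show ?thesis using True by (auto simp: \<sigma>_def zero_less_mult_iff linorder_neq_iff)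
  next
    case False
    then have h1: "\<sigma> * c (ps i) > 0" using Suc by auto
    have h2: "c (ps i) * c (ps (Suc i)) > 0" using c_consec[of i] Suc.prems False by auto
    have "(\<sigma> * c (ps i)) * (c (ps i) * c (ps (Suc i))) > 0" using h1 h2 by simp
    then have "(\<sigma> * c (ps (Suc i))) * (c (ps i))^2 > 0" by (simp add: power2_eq_square ac_simps)
    then show ?thesis by (simp add: zero_less_mult_iff)
  qed
qed

definition W :: "real poly" where "W = q * pderiv p - p * pderiv q"

lemma card_Sp: "card (ps ` {1..k}) = k" using card_image[OF ps_inj] by simp

lemma W_formula: "W = (\<Sum>s\<in>ps`{1..k}. smult (c s) ((p div [:-s,1:])^2))"
  unfolding W_def c_def
proof (rule wronskian_formula)
  show "finite (ps ` {1..k})" by simp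
  show "card (ps ` {1..k}) = degree p" using card_Sp dp by simp
  show "\<forall>s\<in>ps ` {1..k}. poly p s = 0" using roots_p by auto
  show "\<forall>s\<in>ps ` {1..k}. poly (pderiv p) s \<noteq> 0" using dp_at_ps by auto
  show "degree q < degree p" using dp dq k2 by simp
qed

lemma W_pos: "\<sigma> * poly W x > 0"
proof -
  define h where "h s = p div [:-s,1:]" for s
  have ph: "p = [:-s,1:] * h s" if "s \<in> ps`{1..k}" for s
    using roots_p that by (simp add: h_def poly_eq_0_iff_dvd)
  have "\<sigma> * poly W x = (\<Sum>s\<in>ps`{1..k}. (\<sigma> * c s) * (poly (h s) x)^2)"
    by (simp add: W_formula poly_sum sum_distrib_left h_def ac_simps)
  also have "\<dots> > 0"
  proof -
    obtain s where s: "s \<in> ps`{1..k}" and hs: "poly (h s) x \<noteq> 0"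
    proof (cases "poly p x = 0")
      case True
      then have "x \<in> ps`{1..k}" using roots_p by auto
      moreover have "poly (h x) x \<noteq> 0"
        using pderiv_at_root[OF ph[OF calculation]] dp_at_ps calculation by auto
      ultimately show ?thesis using that by blast
    next
      case False
      have "ps 1 \<in> ps`{1..k}" using k2 by auto
      moreover have "poly (h (ps 1)) x \<noteq> 0" using False ph[OF calculation] by (auto simp: poly_mult)
      ultimately show ?thesis using that by blast
    qed
    have sc: "\<sigma> * c s > 0" if "s \<in> ps`{1..k}" for s using sigma_c that by auto
    show ?thesis
    proof (rule sum_pos2[OF _ s])
      show "finite (ps ` {1..k})" by simp
      show "0 < \<sigma> * c s * (poly (h s) x)\<^sup>2" using sc[OF s] hs by simp
      show "\<And>i. i \<in> ps ` {1..k} \<Longrightarrow> 0 \<le> \<sigma> * c i * (poly (h i) x)\<^sup>2"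
        using sc by (simp add: less_imp_le)
    qed
  qed
  finally show ?thesis .
qed

end

declare mult_pCons_left[simp del] mult_pCons_right[simp del]

context setting begin

definition pt :: "real \<Rightarrow> real poly" where "pt \<alpha> = p + smult \<alpha> q"

lemma deg_pt: "degree (pt \<alpha>) = k"
proof -
  have "degree (smult \<alpha> q) < degree p" using degree_smult_le[of \<alpha> q] dp dq k2 by linarith
  then show ?thesis unfolding pt_def using dp by (simp add: degree_add_eq_left)
qed

lemma pt0: "pt \<alpha> \<noteq> 0" using deg_pt[of \<alpha>] k2 by auto

lemma W_pt: "W = q * pderiv (pt \<alpha>) - pt \<alpha> * pderiv q"
  by (simp add: W_def pt_def pderiv_add pderiv_smult algebra_simps)

lemma root_pt_sign: "poly (pt \<alpha>) r = 0 \<Longrightarrow> \<sigma> * (poly q r * poly (pderiv (pt \<alpha>)) r) > 0"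
  using W_pos[of r] W_pt[of \<alpha>] by simp

lemma root_pt_simple: "poly (pt \<alpha>) r = 0 \<Longrightarrow> poly (pderiv (pt \<alpha>)) r \<noteq> 0"
  using root_pt_sign by fastforce

lemma card_St_ge: "card {x. poly (pt \<alpha>) x = 0} + 1 \<ge> k"
proof (cases "\<alpha> = 0")
  case True
  then have "{x. poly (pt \<alpha>) x = 0} = ps ` {1..k}" using roots_p by (auto simp: pt_def)
  then show ?thesis using card_Sp by simp
next
  case False
  have "\<forall>i\<in>{1..k-1}. \<exists>x. ps i < x \<and> x < ps (Suc i) \<and> poly (pt \<alpha>) x = 0"
  proof
    fix i assume i: "i \<in> {1..k-1}"
    have lt: "ps i < ps (Suc i)" using ps_less[of i "Suc i"] i by auto
    have "poly (pt \<alpha>) (ps i) = \<alpha> * poly q (ps i)" using roots_p i by (auto simp: pt_def)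
    moreover have "poly (pt \<alpha>) (ps (Suc i)) = \<alpha> * poly q (ps (Suc i))" using roots_p i by (auto simp: pt_def)
    ultimately have "poly (pt \<alpha>) (ps i) * poly (pt \<alpha>) (ps (Suc i)) = \<alpha>^2 * (poly q (ps i) * poly q (ps (Suc i)))"
      by (simp add: power2_eq_square ac_simps)
    also have "\<dots> < 0" using q_alt[OF i] False by (simp add: mult_pos_neg)
    finally show "\<exists>x. ps i < x \<and> x < ps (Suc i) \<and> poly (pt \<alpha>) x = 0"
      using poly_IVT[OF lt] by blast
  qed
  then obtain \<rho> where \<rho>: "\<forall>i\<in>{1..k-1}. ps i < \<rho> i \<and> \<rho> i < ps (Suc i) \<and> poly (pt \<alpha>) (\<rho> i) = 0"
    by metis
  have inj: "inj_on \<rho> {1..k-1}"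
  proof (rule inj_onI)
    have less: "\<rho> i < \<rho> l" if "i \<in> {1..k-1}" "l \<in> {1..k-1}" "i < l" for i l
    proof -
      have "\<rho> i < ps (Suc i)" using \<rho> that by auto
      also have "ps (Suc i) \<le> ps l" using ps_le[of "Suc i" l] that by auto
      also have "ps l < \<rho> l" using \<rho> that by auto
      finally show ?thesis .
    qed
    fix i l assume "i \<in> {1..k-1}" "l \<in> {1..k-1}" "\<rho> i = \<rho> l"
    then show "i = l" using less[of i l] less[of l i] by (cases i l rule: linorder_cases) auto
  qed
  have "k - 1 = card (\<rho> ` {1..k-1})" using card_image[OF inj] by simp
  also have "\<dots> \<le> card {x. poly (pt \<alpha>) x = 0}"
    using \<rho> poly_roots_finite[OF pt0] by (intro card_mono) auto
  finally show ?thesis by simp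
qed

lemma card_St: "card {x. poly (pt \<alpha>) x = 0} = k"
  using card_roots_full[OF pt0, of \<alpha>] card_St_ge[of \<alpha>] deg_pt[of \<alpha>] root_pt_simple by simp

definition d :: "real \<Rightarrow> real \<Rightarrow> real" where "d \<alpha> s = poly q s / poly (pderiv (pt \<alpha>)) s"

lemma sigma_d: "poly (pt \<alpha>) s = 0 \<Longrightarrow> \<sigma> * d \<alpha> s > 0"
proof -
  assume r: "poly (pt \<alpha>) s = 0"
  have h: "\<sigma> * (poly q s * poly (pderiv (pt \<alpha>)) s) > 0" using root_pt_sign[OF r] .
  have nz: "poly (pderiv (pt \<alpha>)) s \<noteq> 0" using root_pt_simple[OF r] .
  have "\<sigma> * d \<alpha> s = \<sigma> * (poly q s * poly (pderiv (pt \<alpha>)) s) / (poly (pderiv (pt \<alpha>)) s)^2"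
    using nz by (simp add: d_def power2_eq_square field_simps)
  also have "\<dots> > 0" using h nz by simp
  finally show ?thesis .
qed

lemma lagrange_pt:
  "q = (\<Sum>s\<in>{x. poly (pt \<alpha>) x = 0}. smult (d \<alpha> s) (pt \<alpha> div [:-s,1:]))"
  unfolding d_def
proof (rule lagrange)
  show "finite {x. poly (pt \<alpha>) x = 0}" using poly_roots_finite[OF pt0] .
  show "card {x. poly (pt \<alpha>) x = 0} = degree (pt \<alpha>)" using card_St deg_pt by simp
  show "\<forall>s\<in>{x. poly (pt \<alpha>) x = 0}. poly (pt \<alpha>) s = 0" by simp
  show "\<forall>s\<in>{x. poly (pt \<alpha>) x = 0}. poly (pderiv (pt \<alpha>)) s \<noteq> 0" using root_pt_simple by simp
  show "degree q < degree (pt \<alpha>)" using deg_pt dq k2 by simp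
qed

lemma cpx_pt: "poly (cpx (pt \<alpha>)) z = poly (cpx p) z + complex_of_real \<alpha> * poly (cpx q) z"
  by (simp add: pt_def cpx_add cpx_smult)

lemma partial_cpx:
  assumes nz: "poly (cpx (pt \<alpha>)) z \<noteq> 0"
  shows "z \<notin> complex_of_real ` {x. poly (pt \<alpha>) x = 0}"
    and "poly (cpx q) z / poly (cpx (pt \<alpha>)) z =
         (\<Sum>s\<in>{x. poly (pt \<alpha>) x = 0}. complex_of_real (d \<alpha> s) / (z - complex_of_real s))"
proof -
  show "z \<notin> complex_of_real ` {x. poly (pt \<alpha>) x = 0}"
    using nz by (auto simp: poly_cpx_of_real)
  define St where "St = {x. poly (pt \<alpha>) x = 0}"
  define g where "g s = pt \<alpha> div [:-s,1:]" for s
  have pg: "pt \<alpha> = [:-s,1:] * g s" if "s \<in> St" for s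
    using that by (simp add: St_def g_def poly_eq_0_iff_dvd)
  have gz: "poly (cpx (g s)) z = poly (cpx (pt \<alpha>)) z / (z - complex_of_real s)" if "s \<in> St" for s
  proof -
    have "z - complex_of_real s \<noteq> 0" using nz that by (auto simp: St_def poly_cpx_of_real)
    moreover have "poly (cpx (pt \<alpha>)) z = (z - complex_of_real s) * poly (cpx (g s)) z"
      by (subst pg[OF that]) (simp add: cpx_mult poly_cpx_lin)
    ultimately show ?thesis by (simp add: field_simps)
  qed
  have "poly (cpx q) z = (\<Sum>s\<in>St. complex_of_real (d \<alpha> s) * poly (cpx (g s)) z)"
    by (subst lagrange_pt[of \<alpha>]) (simp add: cpx_sum cpx_smult poly_sum St_def g_def)
  also have "\<dots> = poly (cpx (pt \<alpha>)) z * (\<Sum>s\<in>St. complex_of_real (d \<alpha> s) / (z - complex_of_real s))"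
    by (simp add: gz sum_distrib_left field_simps)
  finally show "poly (cpx q) z / poly (cpx (pt \<alpha>)) z =
         (\<Sum>s\<in>{x. poly (pt \<alpha>) x = 0}. complex_of_real (d \<alpha> s) / (z - complex_of_real s))"
    using nz by (simp add: St_def)
qed

lemma cpx_pt_roots:
  assumes "poly (cpx (pt \<alpha>)) z = 0" shows "z \<in> complex_of_real ` {x. poly (pt \<alpha>) x = 0}"
proof (rule ccontr)
  assume nin: "z \<notin> complex_of_real ` {x. poly (pt \<alpha>) x = 0}"
  define St where "St = {x. poly (pt \<alpha>) x = 0}"
  define g where "g s = pt \<alpha> div [:-s,1:]" for s
  have pg: "pt \<alpha> = [:-s,1:] * g s" if "s \<in> St" for s
    using that by (simp add: St_def g_def poly_eq_0_iff_dvd)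
  have gz: "poly (cpx (g s)) z = 0" if "s \<in> St" for s
  proof -
    have "z - complex_of_real s \<noteq> 0" using nin that by (auto simp: St_def)
    moreover have "poly (cpx (pt \<alpha>)) z = (z - complex_of_real s) * poly (cpx (g s)) z"
      by (subst pg[OF that]) (simp add: cpx_mult poly_cpx_lin)
    ultimately show ?thesis using assms by simp
  qed
  have "poly (cpx q) z = (\<Sum>s\<in>St. complex_of_real (d \<alpha> s) * poly (cpx (g s)) z)"
    by (subst lagrange_pt[of \<alpha>]) (simp add: cpx_sum cpx_smult poly_sum St_def g_def)
  also have "\<dots> = 0" using gz by simp
  finally have q0: "poly (cpx q) z = 0" .
  then have "poly (cpx p) z = 0" using assms cpx_pt[of \<alpha> z] by simp
  then show False using no_common_root q0 by blast
qed

end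

lemma dist_of_real_c: "dist (complex_of_real x) (complex_of_real y) = \<bar>x - y\<bar>"
  by (simp add: dist_norm flip: of_real_diff)

lemma cnj_ball: "cnj ` ball c r = ball (cnj c) r"
proof -
  have d: "dist (cnj c) (cnj x) = dist c x" for x
    by (simp add: dist_norm flip: complex_cnj_diff)
  show ?thesis
  proof
    show "cnj ` ball c r \<subseteq> ball (cnj c) r" using d by auto
    show "ball (cnj c) r \<subseteq> cnj ` ball c r"
    proof
      fix x assume "x \<in> ball (cnj c) r"
      then have "cnj x \<in> ball c r" using d[of "cnj x"] by simp
      then show "x \<in> cnj ` ball c r" by (metis complex_cnj_cnj image_eqI)
    qed
  qed
qed

lemma Some_in_image: "Some x \<in> Some ` A \<longleftrightarrow> x \<in> A" by auto

lemma real_disk_D: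
  assumes "r > 0" shows "real_disk (Some ` ball (complex_of_real m) r)"
proof -
  have "map_option cnj ` Some ` ball (complex_of_real m) r = Some ` (cnj ` ball (complex_of_real m) r)"
    by (simp add: image_image)
  also have "\<dots> = Some ` ball (complex_of_real m) r" by (simp add: cnj_ball)
  finally show ?thesis using assms unfolding real_disk_def disk_cp1_def by blast
qed

lemma disk_open_real:
  assumes "disk_cp1 D'" "Some (complex_of_real t) \<in> D'"
  shows "\<exists>e>0. \<forall>x. \<bar>x - t\<bar> < e \<longrightarrow> Some (complex_of_real x) \<in> D'"
  using assms(1) unfolding disk_cp1_def
proof (elim disjE exE conjE)
  fix c r assume D: "D' = Some ` ball c r"
  then have "dist c (complex_of_real t) < r" using assms(2) by auto
  moreover have "Some (complex_of_real x) \<in> D'" if "\<bar>x - t\<bar> < r - dist c (complex_of_real t)" for x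
  proof -
    have "dist c (complex_of_real x) \<le> dist c (complex_of_real t) + dist (complex_of_real t) (complex_of_real x)"
      by (rule dist_triangle)
    also have "\<dots> < r" using that by (simp add: dist_of_real_c dist_real_def abs_minus_commute)
    finally show ?thesis using D by auto
  qed
  ultimately show ?thesis by (intro exI[of _ "r - dist c (complex_of_real t)"]) auto
next
  fix w a0 assume w: "w \<noteq> 0" and D: "D' = Some ` {z. a0 < Re (z * cnj w)}"
  have re: "Re (complex_of_real x * cnj w) = x * Re w" for x by simp
  have t: "t * Re w > a0" using assms(2) D re by auto
  define e where "e = (t * Re w - a0) / (\<bar>Re w\<bar> + 1)"
  have e0: "e > 0" using t by (simp add: e_def)
  have "a0 < x * Re w" if "\<bar>x - t\<bar> < e" for x
  proof -
    have "\<bar>x - t\<bar> * \<bar>Re w\<bar> \<le> e * \<bar>Re w\<bar>" using that by (simp add: mult_right_mono)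
    also have "\<dots> < e * (\<bar>Re w\<bar> + 1)" using e0 by simp
    also have "\<dots> = t * Re w - a0" by (simp add: e_def)
    finally have "\<bar>(x - t) * Re w\<bar> < t * Re w - a0" by (simp add: abs_mult)
    then show ?thesis by (simp add: algebra_simps abs_less_iff)
  qed
  then show ?thesis using e0 D re by auto
next
  fix c r assume D: "D' = insert None (Some ` (- cball c r))"
  then have "dist c (complex_of_real t) > r" using assms(2) by auto
  moreover have "Some (complex_of_real x) \<in> D'" if "\<bar>x - t\<bar> < dist c (complex_of_real t) - r" for x
  proof -
    have "dist c (complex_of_real t) \<le> dist c (complex_of_real x) + dist (complex_of_real x) (complex_of_real t)"
      by (rule dist_triangle)
    then have "r < dist c (complex_of_real x)" using that by (simp add: dist_of_real_c dist_real_def)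
    then show ?thesis using D by auto
  qed
  ultimately show ?thesis by (intro exI[of _ "dist c (complex_of_real t) - r"]) auto
qed

lemma disk_endpoint:
  assumes ab: "a < b" and rd: "real_disk D'"
    and sub: "Some ` ball (complex_of_real ((a+b)/2)) ((b-a)/2) \<subset> D'"
  shows "Some (complex_of_real a) \<in> D' \<or> Some (complex_of_real b) \<in> D'"
proof (rule ccontr)
  define m where "m = (a+b)/2"
  define \<rho> where "\<rho> = (b-a)/2"
  assume "\<not> ?thesis"
  then have na: "Some (complex_of_real a) \<notin> D'" and nb: "Some (complex_of_real b) \<notin> D'" by auto
  have inD: "Some (complex_of_real x) \<in> D'" if "a < x" "x < b" for x
  proof -
    have "m - x < \<rho>" "x - m < \<rho>" using that by (simp_all add: m_def \<rho>_def field_simps)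
    then have "\<bar>m - x\<bar> < \<rho>" by (simp add: abs_less_iff)
    then have "Some (complex_of_real x) \<in> Some ` ball (complex_of_real m) \<rho>"
      by (auto simp: dist_real_def)
    then show ?thesis using sub by (auto simp: m_def \<rho>_def)
  qed
  have inm: "Some (complex_of_real m) \<in> D'" using inD[of m] ab by (simp add: m_def del: of_real_divide of_real_add)
  have dk: "disk_cp1 D'" and sym: "map_option cnj ` D' = D'" using rd by (auto simp: real_disk_def)
  from dk show False unfolding disk_cp1_def
  proof (elim disjE exE conjE)
    fix c r assume r: "r > 0" and D: "D' = Some ` ball c r"
    have "Some ` (cnj ` ball c r) = Some ` ball c r"
      using sym D by (simp add: image_image)
    then have "cnj ` ball c r = ball c r" by (simp add: inj_image_eq_iff)
    then have "ball (cnj c) r = ball c r" by (simp add: cnj_ball)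
    then have "cnj c = c" using r by (simp add: ball_eq_ball_iff)
    then have "Im c = 0" by (metis cnj.sel(2) equation_minus_iff neg_equal_zero)
    then obtain cr where cr: "c = complex_of_real cr"
      by (intro that[of "Re c"]) (simp add: complex_eq_iff)
    have mem: "Some (complex_of_real x) \<in> D' \<longleftrightarrow> \<bar>cr - x\<bar> < r" for x
      by (auto simp: D cr dist_of_real_c dist_real_def)
    have ha: "\<bar>cr - a\<bar> \<ge> r" using na mem by force
    have hb: "\<bar>cr - b\<bar> \<ge> r" using nb mem by force
    have hm: "\<bar>cr - m\<bar> < r" using inm mem by blast
    define mm where "mm = (a+b)/2"
    have mm2: "2*mm = a + b" by (simp add: mm_def)
    have hm': "cr - mm < r" "mm - cr < r" using hm by (simp_all add: m_def mm_def abs_less_iff)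
    have l1: "cr - r \<le> a"
    proof (rule ccontr)
      assume n: "\<not> cr - r \<le> a"
      define t where "t = (a + (cr - r))/2"
      have t2: "2*t = a + (cr - r)" by (simp add: t_def)
      have x1: "a < t" "t < b" using hm' ab n mm2 t2 by linarith+
      then have "\<bar>cr - t\<bar> < r" using mem inD by blast
      then show False using n t2 by (simp add: abs_less_iff)
    qed
    have l2: "b \<le> cr + r"
    proof (rule ccontr)
      assume n: "\<not> b \<le> cr + r"
      define t where "t = (b + (cr + r))/2"
      have t2: "2*t = b + (cr + r)" by (simp add: t_def)
      have x1: "a < t" "t < b" using hm' ab n mm2 t2 by linarith+
      then have "\<bar>cr - t\<bar> < r" using mem inD by blast
      then show False using n t2 by (simp add: abs_less_iff)
    qed
    have hm2: "\<bar>cr - mm\<bar> < r" using hm by (simp add: m_def mm_def)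
    have "a \<ge> cr - r" using l1 .
    have "a < cr + r" using hm' ab mm2 by linarith
    then have "a \<le> cr - r" using ha by (auto simp: abs_if split: if_splits)
    have "b > cr - r" using hm' ab mm2 by linarith
    then have "b \<ge> cr + r" using hb by (auto simp: abs_if split: if_splits)
    have "a = cr - r" "b = cr + r" using l1 l2 \<open>a \<le> cr - r\<close> \<open>b \<ge> cr + r\<close> by linarith+
    then have "cr = m" "r = \<rho>" by (auto simp: m_def \<rho>_def)
    then have "D' = Some ` ball (complex_of_real m) \<rho>"
      using D cr by simp
    then show False using sub by (simp add: m_def \<rho>_def)
  next
    fix w a0 assume D: "D' = Some ` {z. a0 < Re (z * cnj w)}"
    have mem: "Some (complex_of_real x) \<in> D' \<longleftrightarrow> a0 < x * Re w" for x by (auto simp: D)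
    have "a * Re w \<le> a0" "b * Re w \<le> a0" "a0 < m * Re w" using na nb inm mem by auto
    then show False by (simp add: m_def algebra_simps)
  next
    fix c r assume D: "D' = insert None (Some ` (- cball c r))"
    have mem: "Some (complex_of_real x) \<in> D' \<longleftrightarrow> dist c (complex_of_real x) > r" for x by (auto simp: D)
    have ha: "norm (complex_of_real a - c) \<le> r" using na mem by (force simp: dist_norm norm_minus_commute)
    have hb: "norm (complex_of_real b - c) \<le> r" using nb mem by (force simp: dist_norm norm_minus_commute)
    have hm: "norm (complex_of_real m - c) > r" using inm mem by (force simp: dist_norm norm_minus_commute)
    have "complex_of_real m - c = ((complex_of_real a - c) + (complex_of_real b - c)) / 2"
      by (simp add: m_def field_simps)
    then have "norm (complex_of_real m - c) \<le> (norm (complex_of_real a - c) + norm (complex_of_real b - c)) / 2"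
      by (metis norm_triangle_ineq norm_divide norm_numeral divide_right_mono zero_le_numeral)
    then have "2 * norm (complex_of_real m - c) \<le> norm (complex_of_real a - c) + norm (complex_of_real b - c)"
      by (simp add: le_divide_eq mult.commute)
    then show False using ha hb hm by linarith
  qed
qed


declare mult_pCons_left[simp del] mult_pCons_right[simp del]

context setting begin

lemma St_fin: "finite {x. poly (pt \<alpha>) x = 0}" using poly_roots_finite[OF pt0] .

lemma rs_facts:
  assumes j: "j \<in> {1..k-1}" and rs: "rs = sorted_list_of_set {x. poly (pt \<alpha>) x = 0}"
  shows "rs!(j-1) < rs!j" "poly (pt \<alpha>) (rs!(j-1)) = 0" "poly (pt \<alpha>) (rs!j) = 0"
    "\<forall>s. poly (pt \<alpha>) s = 0 \<longrightarrow> s \<le> rs!(j-1) \<or> rs!j \<le> s"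
proof -
  have len: "length rs = k" using rs card_St[of \<alpha>] St_fin by simp
  have set: "set rs = {x. poly (pt \<alpha>) x = 0}" using rs St_fin by simp
  have sw: "sorted_wrt (<) rs" using rs strict_sorted_list_of_set[of "{x. poly (pt \<alpha>) x = 0}"] by simp
  have jk: "j - 1 < j" "j < k" using j by auto
  show "rs!(j-1) < rs!j" using sorted_wrt_nth_less[OF sw jk(1)] jk len by simp
  show "poly (pt \<alpha>) (rs!(j-1)) = 0" "poly (pt \<alpha>) (rs!j) = 0"
    using set jk len nth_mem[of "j-1" rs] nth_mem[of j rs] by auto
  show "\<forall>s. poly (pt \<alpha>) s = 0 \<longrightarrow> s \<le> rs!(j-1) \<or> rs!j \<le> s"
  proof (intro allI impI)
    fix s assume "poly (pt \<alpha>) s = 0"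
    then have "s \<in> set rs" using set by simp
    then obtain i where i: "i < k" "s = rs!i" using len by (auto simp: in_set_conv_nth)
    show "s \<le> rs!(j-1) \<or> rs!j \<le> s"
    proof (cases "i < j")
      case True
      then have "i = j - 1 \<or> i < j - 1" by auto
      then show ?thesis using sorted_wrt_nth_less[OF sw, of i "j-1"] i jk len by auto
    next
      case False
      then have "i = j \<or> j < i" by auto
      then show ?thesis using sorted_wrt_nth_less[OF sw, of j i] i jk len by auto
    qed
  qed
qed

lemma real_in_ball:
  assumes "complex_of_real s \<in> ball (complex_of_real ((a+b)/2)) ((b-a)/2)"
  shows "a < s" "s < b"
proof -
  define m where "m = (a+b)/2"
  define r where "r = (b-a)/2"
  have m2: "2*m = a+b" and r2: "2*r = b-a" by (simp_all add: m_def r_def)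
  have "complex_of_real s \<in> ball (complex_of_real m) r" using assms by (simp only: m_def r_def)
  then have "\<bar>m - s\<bar> < r" by (simp only: mem_ball dist_of_real_c)
  then have h: "m - s < r" "s - m < r" by (auto simp: abs_less_iff)
  show "a < s" using h m2 r2 by linarith
  show "s < b" using h m2 r2 by linarith
qed

lemma in_ball_real:
  assumes "a < s" "s < b"
  shows "complex_of_real s \<in> ball (complex_of_real ((a+b)/2)) ((b-a)/2)"
proof -
  define m where "m = (a+b)/2"
  define r where "r = (b-a)/2"
  have m2: "2*m = a+b" and r2: "2*r = b-a" by (simp_all add: m_def r_def)
  have "m - s < r" "s - m < r" using assms m2 r2 by linarith+
  then have "\<bar>m - s\<bar> < r" by (simp add: abs_less_iff)
  then have "complex_of_real s \<in> ball (complex_of_real m) r" by (simp only: mem_ball dist_of_real_c)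
  then show ?thesis by (simp only: m_def r_def)
qed

lemma no_common_real: "poly p x = 0 \<Longrightarrow> poly q x \<noteq> 0"
  using roots_p q_at_ps by auto

lemma inj_D:
  assumes ab: "a < b" and ra: "poly (pt \<alpha>) a = 0" and rb: "poly (pt \<alpha>) b = 0"
    and out: "\<forall>s. poly (pt \<alpha>) s = 0 \<longrightarrow> s \<le> a \<or> b \<le> s"
  shows "inj_on (ratmap q p) (Some ` ball (complex_of_real ((a+b)/2)) ((b-a)/2))"
proof -
  define B where "B = ball (complex_of_real ((a+b)/2)) ((b-a)/2)"
  define St where "St = {x. poly (pt \<alpha>) x = 0}"
  have nz: "poly (cpx (pt \<alpha>)) z \<noteq> 0" if "z \<in> B" for z
  proof
    assume "poly (cpx (pt \<alpha>)) z = 0"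
    then obtain s where s: "poly (pt \<alpha>) s = 0" "z = complex_of_real s" using cpx_pt_roots by blast
    have "complex_of_real s \<in> ball (complex_of_real ((a+b)/2)) ((b-a)/2)"
      using that unfolding B_def s(2) .
    then have "a < s" "s < b" using real_in_ball by blast+
    then show False using out s by force
  qed
  have main: "z = w" if z: "z \<in> B" and w: "w \<in> B" and eq: "ratmap q p (Some z) = ratmap q p (Some w)" for z w
  proof -
    have cross: "poly (cpx q) z * poly (cpx p) w = poly (cpx q) w * poly (cpx p) z"
    proof (cases "poly (cpx p) z = 0")
      case True
      then have "poly (cpx p) w = 0" using eq by (auto simp: ratmap_def split: if_splits)
      then show ?thesis using True by simp
    next
      case False
      then have "poly (cpx p) w \<noteq> 0" using eq by (auto simp: ratmap_def split: if_splits)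
      then show ?thesis using False eq by (auto simp: ratmap_def field_simps)
    qed
    have cross2: "poly (cpx q) z * poly (cpx (pt \<alpha>)) w = poly (cpx q) w * poly (cpx (pt \<alpha>)) z"
      using cross by (simp add: cpx_pt algebra_simps)
    have "poly (cpx q) z / poly (cpx (pt \<alpha>)) z = poly (cpx q) w / poly (cpx (pt \<alpha>)) w"
      using cross2 nz[OF z] nz[OF w] by (simp add: field_simps)
    then have sums: "(\<Sum>s\<in>St. complex_of_real (d \<alpha> s) / (z - complex_of_real s)) =
                     (\<Sum>s\<in>St. complex_of_real (d \<alpha> s) / (w - complex_of_real s))"
      using partial_cpx(2)[OF nz[OF z]] partial_cpx(2)[OF nz[OF w]] by (simp add: St_def)
    show "z = w"
    proof (rule partial_inj[OF ab _ _ _ _ _ _ sums])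
      show "finite St" using St_fin by (simp add: St_def)
      show "St \<noteq> {}" using ra by (auto simp: St_def)
      show "\<forall>s\<in>St. s \<le> a \<or> b \<le> s" using out by (simp add: St_def)
      show "\<forall>s\<in>St. \<sigma> * d \<alpha> s > 0" using sigma_d by (simp add: St_def)
      show "z \<in> ball (complex_of_real ((a+b)/2)) ((b-a)/2)" using z by (simp add: B_def)
      show "w \<in> ball (complex_of_real ((a+b)/2)) ((b-a)/2)" using w by (simp add: B_def)
    qed
  qed
  show ?thesis
  proof (rule inj_onI)
    fix x y assume "x \<in> Some ` ball (complex_of_real ((a+b)/2)) ((b-a)/2)"
      "y \<in> Some ` ball (complex_of_real ((a+b)/2)) ((b-a)/2)" "ratmap q p x = ratmap q p y"
    then show "x = y" using main unfolding B_def by auto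
  qed
qed

end

declare mult_pCons_left[simp del] mult_pCons_right[simp del]

context setting begin

lemma max_D:
  assumes ab: "a < b" and ra: "poly (pt \<alpha>) a = 0" and rb: "poly (pt \<alpha>) b = 0"
    and out: "\<forall>s. poly (pt \<alpha>) s = 0 \<longrightarrow> s \<le> a \<or> b \<le> s"
    and rd: "real_disk D'" and sub: "Some ` ball (complex_of_real ((a+b)/2)) ((b-a)/2) \<subset> D'"
  shows "\<not> inj_on (ratmap q p) D'"
proof
  assume inj: "inj_on (ratmap q p) D'"
  define St where "St = {x. poly (pt \<alpha>) x = 0}"
  have fin: "finite St" using St_fin by (simp add: St_def)
  have dk: "disk_cp1 D'" using rd by (simp add: real_disk_def)
  obtain x where xS: "x \<notin> St" and xo: "x < a \<or> b < x" and xD: "Some (complex_of_real x) \<in> D'"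
  proof -
    from disk_endpoint[OF ab rd sub]
    show ?thesis
    proof
      assume "Some (complex_of_real a) \<in> D'"
      from disk_open_real[OF dk this] obtain e where e: "e > 0"
        "\<forall>x. \<bar>x - a\<bar> < e \<longrightarrow> Some (complex_of_real x) \<in> D'" by blast
      have "infinite ({a-e<..<a} - St)" using e(1) fin by (intro Diff_infinite_finite) auto
      then obtain x where "x \<in> {a-e<..<a} - St" using infinite_imp_nonempty by blast
      then show ?thesis using e that by (auto simp: abs_if)
    next
      assume "Some (complex_of_real b) \<in> D'"
      from disk_open_real[OF dk this] obtain e where e: "e > 0"
        "\<forall>x. \<bar>x - b\<bar> < e \<longrightarrow> Some (complex_of_real x) \<in> D'" by blast
      have "infinite ({b<..<b+e} - St)" using e(1) fin by (intro Diff_infinite_finite) auto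
      then obtain x where "x \<in> {b<..<b+e} - St" using infinite_imp_nonempty by blast
      then show ?thesis using e that by (auto simp: abs_if)
    qed
  qed
  have ptx: "poly (pt \<alpha>) x \<noteq> 0" using xS by (simp add: St_def)
  define v where "v = poly q x / poly (pt \<alpha>) x"
  have da: "poly (pderiv (pt \<alpha>)) a \<noteq> 0" and db: "poly (pderiv (pt \<alpha>)) b \<noteq> 0"
    using root_pt_simple ra rb by auto
  have dd: "poly (pderiv (pt \<alpha>)) a * poly (pderiv (pt \<alpha>)) b < 0"
  proof (rule consec_roots_pderiv[OF ab ra rb _ da db])
    fix y assume "a < y" "y < b" then show "poly (pt \<alpha>) y \<noteq> 0" using out by force
  qed
  have "(\<sigma> * d \<alpha> a) * (\<sigma> * d \<alpha> b) > 0" using sigma_d[OF ra] sigma_d[OF rb] by simp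
  then have "\<sigma>^2 * (d \<alpha> a * d \<alpha> b) > 0" by (simp add: power2_eq_square ac_simps)
  then have ddab: "d \<alpha> a * d \<alpha> b > 0" by (auto simp: zero_less_mult_iff)
  have "poly q a * poly q b = (d \<alpha> a * d \<alpha> b) * (poly (pderiv (pt \<alpha>)) a * poly (pderiv (pt \<alpha>)) b)"
    using da db by (simp add: d_def field_simps)
  also have "\<dots> < 0" using ddab dd by (simp add: mult_pos_neg)
  finally have qab: "poly q a * poly q b < 0" .
  define F where "F = q - smult v (pt \<alpha>)"
  have "poly F a * poly F b < 0" using qab ra rb by (simp add: F_def)
  from poly_IVT[OF ab this] obtain y where y: "a < y" "y < b" "poly F y = 0" by blast
  have pty: "poly (pt \<alpha>) y \<noteq> 0" using out y by force
  have qy: "poly q y = v * poly (pt \<alpha>) y" using y(3) by (simp add: F_def)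
  have "poly q y * poly (pt \<alpha>) x = poly q x * poly (pt \<alpha>) y"
    using qy ptx by (simp add: v_def field_simps)
  then have cr: "poly q y * poly p x = poly q x * poly p y"
    by (simp add: pt_def algebra_simps)
  have req: "ratmap q p (Some (complex_of_real x)) = ratmap q p (Some (complex_of_real y))"
  proof (cases "poly p x = 0")
    case True
    then have "poly q x \<noteq> 0" using no_common_real by blast
    then have "poly p y = 0" using cr True by simp
    then show ?thesis using True by (simp add: ratmap_def poly_cpx_of_real)
  next
    case False
    have "poly p y \<noteq> 0"
    proof
      assume "poly p y = 0"
      then have "poly q y = 0" using cr False by simp
      then show False using no_common_real \<open>poly p y = 0\<close> by blast
    qed
    then have "poly q x / poly p x = poly q y / poly p y" using False cr by (simp add: field_simps)
    then show ?thesis using False \<open>poly p y \<noteq> 0\<close>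
      by (simp add: ratmap_def poly_cpx_of_real flip: of_real_divide)
  qed
  have yD: "Some (complex_of_real y) \<in> D'" using in_ball_real[OF y(1,2)] sub by blast
  have "x \<noteq> y" using xo y by auto
  then show False using inj_onD[OF inj req xD yD] by simp
qed

lemma main: "\<forall>\<alpha>::real. \<forall>j\<in>{1..k-1}.
           (let rs = sorted_list_of_set {x::real. poly (p + smult \<alpha> q) x = 0}
            in max_real_univalent (ratmap q p)
                 (Some ` ball (complex_of_real ((rs ! (j-1) + rs ! j) / 2)) ((rs ! j - rs ! (j-1)) / 2)))"
proof (intro allI ballI)
  fix \<alpha> :: real and j assume j: "j \<in> {1..k-1}"
  define rs where "rs = sorted_list_of_set {x::real. poly (pt \<alpha>) x = 0}"
  have rs': "sorted_list_of_set {x::real. poly (p + smult \<alpha> q) x = 0} = rs" by (simp add: rs_def pt_def)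
  note f = rs_facts[OF j rs_def]
  define a where "a = rs!(j-1)"
  define b where "b = rs!j"
  have ab: "a < b" and ra: "poly (pt \<alpha>) a = 0" and rb: "poly (pt \<alpha>) b = 0"
    and out: "\<forall>s. poly (pt \<alpha>) s = 0 \<longrightarrow> s \<le> a \<or> b \<le> s"
    using f by (simp_all add: a_def b_def)
  have "max_real_univalent (ratmap q p) (Some ` ball (complex_of_real ((a+b)/2)) ((b-a)/2))"
    unfolding max_real_univalent_def
  proof (intro conjI)
    show "real_disk (Some ` ball (complex_of_real ((a+b)/2)) ((b-a)/2))"
      using real_disk_D[of "(b-a)/2" "(a+b)/2"] ab by simp
    show "inj_on (ratmap q p) (Some ` ball (complex_of_real ((a+b)/2)) ((b-a)/2))"
      using inj_D[OF ab ra rb out] .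
    show "\<not> (\<exists>D'. real_disk D' \<and> Some ` ball (complex_of_real ((a+b)/2)) ((b-a)/2) \<subset> D' \<and> inj_on (ratmap q p) D')"
      using max_D[OF ab ra rb out] by blast
  qed
  then show "let rs = sorted_list_of_set {x::real. poly (p + smult \<alpha> q) x = 0}
            in max_real_univalent (ratmap q p)
                 (Some ` ball (complex_of_real ((rs ! (j-1) + rs ! j) / 2)) ((rs ! j - rs ! (j-1)) / 2))"
    unfolding rs' Let_def a_def b_def .
qed

end

theorem theorem2:
  fixes p q :: "real poly" and k :: nat and ps qs :: "nat \<Rightarrow> real"
  assumes "k \<ge> 2" and "degree p = k" and "degree q = k - 1"
    and "{z. poly (cpx p) z = 0} = complex_of_real ` ps ` {1..k}"
    and "{z. poly (cpx q) z = 0} = complex_of_real ` qs ` {1..k-1}"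
    and "\<forall>i\<in>{1..k}. order (ps i) p = 1"
    and "\<forall>i\<in>{1..k-1}. order (qs i) q = 1"
    and "\<forall>i\<in>{1..k-1}. ps i < qs i \<and> qs i < ps (Suc i)"
  shows "\<forall>\<alpha>::real. \<forall>j\<in>{1..k-1}.
           (let rs = sorted_list_of_set {x::real. poly (p + smult \<alpha> q) x = 0}
            in max_real_univalent (ratmap q p)
                 (Some ` ball (complex_of_real ((rs ! (j-1) + rs ! j) / 2)) ((rs ! j - rs ! (j-1)) / 2)))"
proof -
  interpret setting p q k ps qs by (rule setting.intro) (use assms in auto)
  show ?thesis by (rule main)
qed


end
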